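(* Let $(G,\varepsilon_G)$ be a graded Lie group with $\mathcal G(G)\neq\emptyset$, $Z\subseteq Z(G^\uparrow)$ a closed subgroup which is normal in $G$, $q\colon G\to\underline G=G/Z$ the quotient map and notation as in the context. Fix $W=(x,\sigma)\in\mathcal G(G)$, $\underline W=(x,q(\sigma))$ and $\mathcal W_+=G^\uparrow.W$. Then for each $\alpha\in Z^-$: (a) for every $W_1=(x_1,\sigma_1)\in\mathcal G(G)$, $q_{\mathcal G}(W_1^{'\alpha})=(-x_1,q(\sigma_1))$; (b) if $\alpha^2\neq e$, the map $W_1\mapsto W_1^{'\alpha}$ is not involutive; (c) the map $\mathcal G(G)\to\mathcal G(G)$, $(x_1,\sigma_1)\mapsto(-x_1,\alpha\sigma_1)$ is $G^\uparrow$-equivariant; (d) $W_1^{'\alpha}=\alpha*W_1'$ for $W_1\in\mathcal G(G)$; (e) $*_\alpha$ defines an action of $G$ on $\mathcal G(G)$ satisfying $W_1^{'\alpha}=\sigma_1*_\alpha W_1$ for $W_1=(x_1,\sigma_1)\in\mathcal G(G)$; if $W^{'\alpha}\in G^\uparrow.W$, then $\mathcal W_+$ is invariant under $G$ for the action $*_\alpha$; (f) there exists $\alpha\in Z^-$ with $W^{'\alpha}\in\mathcal W_+$ if and only if $(-x,q(\sigma))\in q(G^\uparrow).\underline W$; if this holds for $\alpha$, then for $\beta\in Z^-$ one has $W^{'\beta}\in\mathcal W_+$ if and only if $\beta^{-1}\alpha\in Z_2$, and in this case the twisted actions of $g\in G^\downarrow$ are related by $g*_\beta=(\beta\alpha^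{-1})*g*_\alpha$.
   Context: $G$ is a finite-dimensional Lie group with Lie algebra $\mathfrak g$ and continuous homomorphism $\varepsilon_G\colon G\to\{\pm1\}$, $G^\uparrow=\ker\varepsilon_G$, $G^\downarrow=G\setminus G^\uparrow$. For a graded Lie group $H$ (here $G$ or $\underline G$ with grading induced from $G$), $\mathcal G(H)=\{(x,\tau)\in\mathfrak g\times H^\downarrow:\tau^2=e,\operatorname{Ad}_{\mathfrak g}(\tau)x=x\}$ with action $h.(x,\tau)=(\varepsilon(h)\operatorname{Ad}_{\mathfrak g}(h)x,h\tau h^{-1})$ (for $\underline G$, $\operatorname{Ad}_{\mathfrak g}$ is the factorized adjoint action, which exists since $Z$ acts trivially on $\mathfrak g$). $q_{\mathcal G}\colon\mathcal G(G)\to\mathcal G(\underline G)$, $(x,\sigma)\mapsto(x,q(\sigma))$. For $W_1=(x_1,\sigma_1)\in\mathcal G(G)$, $W_1'=(-x_1,\sigma_1)$. $Z^-=\{\gamma\in Z:\sigma\gamma\sigma=\gamma^{-1}\}$ (independent of the choice of $\sigma\in G^\downarrow$). For $\alpha\in Z^-$: $\alpha*(x_1,\sigma_1)=(x_1,\alpha\sigma_1)$ (an action of $Z^-$ on $\mathcal G(G)$); the $\alpha$-twisted complement is $W_1^{'\alpha}=(-x_1,\alpha\sigma_1)$; the twisted action is $g*_\alpha W_1=g.W_1$ for $g\in G^\uparrow$ and $g*_\alpha W_1=g.(\alpha^{-1}*W_1)=\alpha*(g.W_1)$ for $g\in G^\downarrow$. Further $G^\uparrow_{\underline W}=\{g\in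 G^\uparrow:q(g).\underline W=\underline W\}$, $\partial\colon G^\uparrow_{\underline W}\to Z^-$, $\partial(g)=g\sigma g^{-1}\sigma$, and $Z_2=\partial(G^\uparrow_{\underline W})$. *)

theory Defs
  imports "HOL-Analysis.Analysis" "HOL-Algebra.Group_Action"
begin

text \<open>Abstract rendering of a graded (Lie) group: a group H (HOL-Algebra),
a grading eps with values in {1,-1} (as reals), and the adjoint action
Ad of H on the Lie algebra, a real vector space of type 'v.\<close>

definition Gup :: "('g,'m) monoid_scheme \<Rightarrow> ('g \<Rightarrow> real) \<Rightarrow> 'g set" where
  "Gup H eps = {g \<in> carrier H. eps g = 1}"

definition Gdown :: "('g,'m) monoid_scheme \<Rightarrow> ('g \<Rightarrow> real) \<Rightarrow> 'g set" where
  "Gdown H eps = carrier H - Gup H eps"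

definition GPairs :: "('g,'m) monoid_scheme \<Rightarrow> ('g \<Rightarrow> real) \<Rightarrow> ('g \<Rightarrow> 'v \<Rightarrow> 'v)
    \<Rightarrow> ('v \<times> 'g) set" where
  "GPairs H eps Ad = {(x, \<tau>). \<tau> \<in> Gdown H eps \<and> \<tau> \<otimes>\<^bsub>H\<^esub> \<tau> = \<one>\<^bsub>H\<^esub> \<and> Ad \<tau> x = x}"

definition gact :: "('g,'m) monoid_scheme \<Rightarrow> ('g \<Rightarrow> real) \<Rightarrow> ('g \<Rightarrow> 'v::real_vector \<Rightarrow> 'v)
    \<Rightarrow> 'g \<Rightarrow> 'v \<times> 'g \<Rightarrow> 'v \<times> 'g" where
  "gact H eps Ad h W = (eps h *\<^sub>R Ad h (fst W), h \<otimes>\<^bsub>H\<^esub> snd W \<otimes>\<^bsub>H\<^esub> inv\<^bsub>H\<^esub> h)"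

definition qmap :: "('g,'m) monoid_scheme \<Rightarrow> 'g set \<Rightarrow> 'g \<Rightarrow> 'g set" where
  "qmap G Z g = Z #>\<^bsub>G\<^esub> g"

definition eps_q :: "('g \<Rightarrow> real) \<Rightarrow> 'g set \<Rightarrow> real" where
  "eps_q eps C = eps (SOME g. g \<in> C)"

definition Ad_q :: "('g \<Rightarrow> 'v \<Rightarrow> 'v) \<Rightarrow> 'g set \<Rightarrow> 'v \<Rightarrow> 'v" where
  "Ad_q Ad C = Ad (SOME g. g \<in> C)"

definition qG :: "('g,'m) monoid_scheme \<Rightarrow> 'g set \<Rightarrow> 'v \<times> 'g \<Rightarrow> 'v \<times> 'g set" where
  "qG G Z W = (fst W, qmap G Z (snd W))"

definition Zminus :: "('g,'m) monoid_scheme \<Rightarrow> 'g set \<Rightarrow> 'g \<Rightarrow> 'g set" where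
  "Zminus G Z \<sigma> = {\<gamma> \<in> Z. \<sigma> \<otimes>\<^bsub>G\<^esub> \<gamma> \<otimes>\<^bsub>G\<^esub> \<sigma> = inv\<^bsub>G\<^esub> \<gamma>}"

definition zstar :: "('g,'m) monoid_scheme \<Rightarrow> 'g \<Rightarrow> 'v \<times> 'g \<Rightarrow> 'v \<times> 'g" where
  "zstar G \<alpha> W = (fst W, \<alpha> \<otimes>\<^bsub>G\<^esub> snd W)"

definition compl :: "'v::real_vector \<times> 'g \<Rightarrow> 'v \<times> 'g" where
  "compl W = (- fst W, snd W)"

definition tcompl :: "('g,'m) monoid_scheme \<Rightarrow> 'g \<Rightarrow> 'v::real_vector \<times> 'g \<Rightarrow> 'v \<times> 'g" where
  "tcompl G \<alpha> W = (- fst W, \<alpha> \<otimes>\<^bsub>G\<^esub> snd W)"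

definition tact :: "('g,'m) monoid_scheme \<Rightarrow> ('g \<Rightarrow> real) \<Rightarrow> ('g \<Rightarrow> 'v::real_vector \<Rightarrow> 'v)
    \<Rightarrow> 'g \<Rightarrow> 'g \<Rightarrow> 'v \<times> 'g \<Rightarrow> 'v \<times> 'g" where
  "tact G eps Ad \<alpha> g W =
     (if g \<in> Gup G eps then gact G eps Ad g W
      else gact G eps Ad g (zstar G (inv\<^bsub>G\<^esub> \<alpha>) W))"

definition GupStab :: "('g,'m) monoid_scheme \<Rightarrow> ('g \<Rightarrow> real) \<Rightarrow> ('g \<Rightarrow> 'v::real_vector \<Rightarrow> 'v)
    \<Rightarrow> 'g set \<Rightarrow> 'v \<times> 'g set \<Rightarrow> 'g set" where
  "GupStab G eps Ad Z Wq =
     {g \<in> Gup G eps. gact (G Mod Z) (eps_q eps) (Ad_q Ad) (qmap G Z g) Wq = Wq}"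

definition bdry :: "('g,'m) monoid_scheme \<Rightarrow> 'g \<Rightarrow> 'g \<Rightarrow> 'g" where
  "bdry G \<sigma> g = g \<otimes>\<^bsub>G\<^esub> \<sigma> \<otimes>\<^bsub>G\<^esub> inv\<^bsub>G\<^esub> g \<otimes>\<^bsub>G\<^esub> \<sigma>"

end

theory Submission
  imports Defs
begin



lemma group_actionI':
  fixes G (structure)
  assumes grp: "group G"
    and cl: "\<And>g y. g \<in> carrier G \<Longrightarrow> y \<in> E \<Longrightarrow> f g y \<in> E"
    and one: "\<And>y. y \<in> E \<Longrightarrow> f \<one>\<^bsub>G\<^esub> y = y"
    and mult: "\<And>g h y. g \<in> carrier G \<Longrightarrow> h \<in> carrier G \<Longrightarrow> y \<in> E \<Longrightarrow>
                f (g \<otimes>\<^bsub>G\<^esub> h) y = f g (f h y)"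
  shows "group_action G E (\<lambda>g. restrict (f g) E)"
proof -
  interpret group G by (rule grp)
  have bij: "restrict (f g) E \<in> Bij E" if g: "g \<in> carrier G" for g
  proof -
    have "bij_betw (f g) E E"
    proof (rule bij_betwI[where g = "f (inv g)"])
      show "f g \<in> E \<rightarrow> E" using cl g by auto
      show "f (inv g) \<in> E \<rightarrow> E" using cl g by auto
      show "f (inv g) (f g y) = y" if "y \<in> E" for y
        using mult[of "inv g" g y] one that g by simp
      show "f g (f (inv g) y) = y" if "y \<in> E" for y
        using mult[of g "inv g" y] one that g by simp
    qed
    then show ?thesis unfolding Bij_def by simp
  qed
  show ?thesis
    unfolding group_action_def
  proof (rule group_hom.intro)
    show "group G" by (rule grp)
    show "group (BijGroup E)" by (rule group_BijGroup)
    show "group_hom_axioms G (BijGroup E) (\<lambda>g. restrict (f g) E)"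
      unfolding group_hom_axioms_def hom_def
    proof (intro CollectI conjI ballI)
      show "(\<lambda>g. restrict (f g) E) \<in> carrier G \<rightarrow> carrier (BijGroup E)"
        using bij by (auto simp: BijGroup_def)
      fix g h assume g: "g \<in> carrier G" and h: "h \<in> carrier G"
      have eq: "restrict (f g) E \<otimes>\<^bsub>BijGroup E\<^esub> restrict (f h) E
          = compose E (restrict (f g) E) (restrict (f h) E)"
        using bij[OF g] bij[OF h] by (simp add: BijGroup_def)
      show "restrict (f (g \<otimes> h)) E = restrict (f g) E \<otimes>\<^bsub>BijGroup E\<^esub> restrict (f h) E"
        unfolding eq
      proof (rule ext)
        fix y show "restrict (f (g \<otimes> h)) E y = compose E (restrict (f g) E) (restrict (f h) E) y"
          using cl[OF h, of y] mult[OF g h, of y] by (cases "y \<in> E") (simp_all add: compose_def)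
      qed
    qed
  qed
qed



locale gl = group G for G :: "('g,'m) monoid_scheme" (structure) +
  fixes eps :: "'g \<Rightarrow> real" and Ad :: "'g \<Rightarrow> 'v::real_vector \<Rightarrow> 'v"
    and Z :: "'g set" and x :: 'v and \<sigma> :: 'g
  assumes eps_val: "\<forall>g\<in>carrier G. eps g = 1 \<or> eps g = -1"
    and eps_hom: "\<forall>g\<in>carrier G. \<forall>h\<in>carrier G. eps (g \<otimes>\<^bsub>G\<^esub> h) = eps g * eps h"
    and Ad_lin: "\<forall>g\<in>carrier G. linear (Ad g)"
    and Ad_one: "Ad \<one>\<^bsub>G\<^esub> = id"
    and Ad_hom: "\<forall>g\<in>carrier G. \<forall>h\<in>carrier G. Ad (g \<otimes>\<^bsub>G\<^esub> h) = Ad g \<circ> Ad h"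
    and Z_sub: "Z \<subseteq> Gup G eps"
    and Z_central: "\<forall>z\<in>Z. \<forall>g\<in>Gup G eps. z \<otimes>\<^bsub>G\<^esub> g = g \<otimes>\<^bsub>G\<^esub> z"
    and Z_normal: "Z \<lhd> G"
    and Z_Ad_triv: "\<forall>z\<in>Z. Ad z = id"
    and W_in: "(x, \<sigma>) \<in> GPairs G eps Ad"
begin

lemma Gup_iff: "g \<in> Gup G eps \<longleftrightarrow> g \<in> carrier G \<and> eps g = 1"
  by (simp add: Gup_def)

lemma Gdown_iff: "g \<in> Gdown G eps \<longleftrightarrow> g \<in> carrier G \<and> eps g = -1"
  using eps_val by (auto simp: Gdown_def Gup_def)

lemma GP_iff: "(y, \<tau>) \<in> GPairs G eps Ad \<longleftrightarrow> \<tau> \<in> carrier G \<and> eps \<tau> = -1 \<and> \<tau> \<otimes> \<tau> = \<one> \<and> Ad \<tau> y = y"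
  by (auto simp: GPairs_def Gdown_iff)

lemma eps_m: "g \<in> carrier G \<Longrightarrow> h \<in> carrier G \<Longrightarrow> eps (g \<otimes> h) = eps g * eps h"
  using eps_hom by blast

lemma eps_one: "eps \<one> = 1"
proof -
  have "eps \<one> = eps \<one> * eps \<one>" using eps_m[of \<one> \<one>] by simp
  then show ?thesis using eps_val by force
qed

lemma eps_inv: "g \<in> carrier G \<Longrightarrow> eps (inv g) = eps g"
proof -
  assume g: "g \<in> carrier G"
  have "eps g * eps (inv g) = 1" using eps_m[of g "inv g"] eps_one g by simp
  then show ?thesis using eps_val g by force
qed

lemma Ad_m: "g \<in> carrier G \<Longrightarrow> h \<in> carrier G \<Longrightarrow> Ad (g \<otimes> h) v = Ad g (Ad h v)"
  using Ad_hom by simp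

lemma Ad_inv1: "g \<in> carrier G \<Longrightarrow> Ad (inv g) (Ad g v) = v"
  using Ad_m[of "inv g" g v] Ad_one by simp

lemma Ad_inv2: "g \<in> carrier G \<Longrightarrow> Ad g (Ad (inv g) v) = v"
  using Ad_m[of g "inv g" v] Ad_one by simp

lemma Ad_neg: "g \<in> carrier G \<Longrightarrow> Ad g (- v) = - Ad g v"
  using Ad_lin linear_neg by blast

lemma Ad_scale: "g \<in> carrier G \<Longrightarrow> Ad g (c *\<^sub>R v) = c *\<^sub>R Ad g v"
  using Ad_lin linear_scale by blast

lemma Zsg: "subgroup Z G"
  using Z_normal normal_imp_subgroup by blast

lemma Z_car: "z \<in> Z \<Longrightarrow> z \<in> carrier G"
  using Z_sub by (auto simp: Gup_def)

lemma Z_eps: "z \<in> Z \<Longrightarrow> eps z = 1"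
  using Z_sub by (auto simp: Gup_def)

lemma Z_comm: "z \<in> Z \<Longrightarrow> g \<in> carrier G \<Longrightarrow> eps g = 1 \<Longrightarrow> z \<otimes> g = g \<otimes> z"
  using Z_central by (auto simp: Gup_def)

lemma Z_inv: "z \<in> Z \<Longrightarrow> inv z \<in> Z"
  using Zsg subgroup.m_inv_closed by fastforce

lemma Z_mult: "z \<in> Z \<Longrightarrow> w \<in> Z \<Longrightarrow> z \<otimes> w \<in> Z"
  using Zsg subgroup.m_closed by fastforce

lemma Z_comm2: "z \<in> Z \<Longrightarrow> w \<in> Z \<Longrightarrow> z \<otimes> w = w \<otimes> z"
  using Z_comm Z_car Z_eps by blast

lemma sig: "\<sigma> \<in> carrier G" "eps \<sigma> = -1" "\<sigma> \<otimes> \<sigma> = \<one>" "Ad \<sigma> x = x"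
  using W_in by (auto simp: GP_iff)

lemma sig_inv: "inv \<sigma> = \<sigma>"
  using inv_equality[of \<sigma> \<sigma>] sig by simp

lemma canc1: "a \<in> carrier G \<Longrightarrow> b \<in> carrier G \<Longrightarrow> a \<otimes> (inv a \<otimes> b) = b"
  by (simp add: m_assoc[symmetric])

lemma canc2: "a \<in> carrier G \<Longrightarrow> b \<in> carrier G \<Longrightarrow> inv a \<otimes> (a \<otimes> b) = b"
  by (simp add: m_assoc[symmetric])

lemma sig_canc: "b \<in> carrier G \<Longrightarrow> \<sigma> \<otimes> (\<sigma> \<otimes> b) = b"
  using sig by (simp add: m_assoc[symmetric])

lemma Zm_iff: "\<gamma> \<in> Zminus G Z \<sigma> \<longleftrightarrow> \<gamma> \<in> Z \<and> \<sigma> \<otimes> \<gamma> \<otimes> \<sigma> = inv \<gamma>"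
  by (simp add: Zminus_def)

lemma zm_swap:
  assumes zm: "\<gamma> \<in> Zminus G Z \<sigma>" and h: "h \<in> carrier G" "eps h = -1"
  shows "h \<otimes> \<gamma> = inv \<gamma> \<otimes> h"
proof -
  have gZ: "\<gamma> \<in> Z" and e: "\<sigma> \<otimes> \<gamma> \<otimes> \<sigma> = inv \<gamma>" using zm by (auto simp: Zm_iff)
  have gc: "\<gamma> \<in> carrier G" using Z_car gZ .
  define u where "u = \<sigma> \<otimes> h"
  have uc: "u \<in> carrier G" using u_def h sig by simp
  have ue: "eps u = 1" using u_def h sig eps_m by simp
  have hu: "h = \<sigma> \<otimes> u" using u_def h by (simp add: sig_canc)
  have "h \<otimes> \<gamma> = \<sigma> \<otimes> (u \<otimes> \<gamma>)" using hu uc gc sig by (simp add: m_assoc)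
  also have "\<dots> = \<sigma> \<otimes> (\<gamma> \<otimes> u)" using Z_comm[OF gZ uc ue] by simp
  also have "\<dots> = (\<sigma> \<otimes> \<gamma> \<otimes> \<sigma>) \<otimes> (\<sigma> \<otimes> u)" using uc gc sig by (simp add: m_assoc sig_canc)
  also have "\<dots> = inv \<gamma> \<otimes> h" using e hu by simp
  finally show ?thesis .
qed

lemma zm_inv: assumes zm: "\<gamma> \<in> Zminus G Z \<sigma>" shows "inv \<gamma> \<in> Zminus G Z \<sigma>"
proof -
  have gZ: "\<gamma> \<in> Z" and e: "\<sigma> \<otimes> \<gamma> \<otimes> \<sigma> = inv \<gamma>" using zm by (auto simp: Zm_iff)
  have gc: "\<gamma> \<in> carrier G" using Z_car gZ .
  have "inv (\<sigma> \<otimes> \<gamma> \<otimes> \<sigma>) = \<sigma> \<otimes> inv \<gamma> \<otimes> \<sigma>"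
    using gc sig by (simp add: inv_mult_group sig_inv m_assoc)
  then have "\<sigma> \<otimes> inv \<gamma> \<otimes> \<sigma> = inv (inv \<gamma>)" using e by simp
  then show ?thesis using Z_inv[OF gZ] by (simp add: Zm_iff)
qed

lemma zm_swap2:
  assumes zm: "\<gamma> \<in> Zminus G Z \<sigma>" and h: "h \<in> carrier G" "eps h = -1"
  shows "h \<otimes> inv \<gamma> = \<gamma> \<otimes> h"
  using zm_swap[OF zm_inv[OF zm] h] zm Z_car by (simp add: Zm_iff)

lemma zm_mult:
  assumes a: "a \<in> Zminus G Z \<sigma>" and b: "b \<in> Zminus G Z \<sigma>"
  shows "a \<otimes> b \<in> Zminus G Z \<sigma>"
proof -
  have aZ: "a \<in> Z" and bZ: "b \<in> Z" using a b by (auto simp: Zm_iff)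
  have ac: "a \<in> carrier G" and bc: "b \<in> carrier G" using aZ bZ Z_car by auto
  have "\<sigma> \<otimes> (a \<otimes> b) \<otimes> \<sigma> = (\<sigma> \<otimes> a) \<otimes> b \<otimes> \<sigma>" using ac bc sig by (simp add: m_assoc)
  also have "\<dots> = inv a \<otimes> \<sigma> \<otimes> b \<otimes> \<sigma>" using zm_swap[OF a sig(1,2)] by simp
  also have "\<dots> = inv a \<otimes> inv b" using zm_swap[OF b sig(1,2)] ac bc sig
    by (simp add: m_assoc sig_canc)
  also have "\<dots> = inv (a \<otimes> b)" using ac bc Z_comm2[OF aZ bZ] by (simp add: inv_mult_group)
  finally show ?thesis using Z_mult[OF aZ bZ] by (simp add: Zm_iff)
qed

lemma zm_car: "\<gamma> \<in> Zminus G Z \<sigma> \<Longrightarrow> \<gamma> \<in> carrier G"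
  using Z_car by (simp add: Zm_iff)

lemma zm_eps: "\<gamma> \<in> Zminus G Z \<sigma> \<Longrightarrow> eps \<gamma> = 1"
  using Z_eps by (simp add: Zm_iff)

lemma zm_Ad: "\<gamma> \<in> Zminus G Z \<sigma> \<Longrightarrow> Ad \<gamma> = id"
  using Z_Ad_triv by (simp add: Zm_iff)

lemma gact_pair: "gact G eps Ad g (y, \<tau>) = (eps g *\<^sub>R Ad g y, g \<otimes> \<tau> \<otimes> inv g)"
  by (simp add: gact_def)

lemma zstar_pair: "zstar G a (y, \<tau>) = (y, a \<otimes> \<tau>)"
  by (simp add: zstar_def)

lemma gact_GG:
  assumes g: "g \<in> carrier G" and W: "W \<in> GPairs G eps Ad"
  shows "gact G eps Ad g W \<in> GPairs G eps Ad"
proof -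
  obtain y \<tau> where Wd: "W = (y, \<tau>)" by (cases W)
  have t: "\<tau> \<in> carrier G" "eps \<tau> = -1" "\<tau> \<otimes> \<tau> = \<one>" "Ad \<tau> y = y" using W Wd by (auto simp: GP_iff)
  have ig: "inv g \<in> carrier G" using g by simp
  have c: "g \<otimes> \<tau> \<otimes> inv g \<in> carrier G" using g t by simp
  have e: "eps (g \<otimes> \<tau> \<otimes> inv g) = -1"
  proof -
    have "eps (g \<otimes> \<tau> \<otimes> inv g) = eps g * eps \<tau> * eps g" using g t ig eps_m eps_inv by simp
    also have "\<dots> = - (eps g * eps g)" using t by simp
    also have "eps g * eps g = 1" using eps_val g by auto
    finally show ?thesis by simp
  qed
  have sq: "(g \<otimes> \<tau> \<otimes> inv g) \<otimes> (g \<otimes> \<tau> \<otimes> inv g) = \<one>"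
  proof -
    have "(g \<otimes> \<tau> \<otimes> inv g) \<otimes> (g \<otimes> \<tau> \<otimes> inv g) = g \<otimes> (\<tau> \<otimes> (inv g \<otimes> (g \<otimes> (\<tau> \<otimes> inv g))))"
      using g t by (simp add: m_assoc)
    also have "\<dots> = g \<otimes> ((\<tau> \<otimes> \<tau>) \<otimes> inv g)" using g t(1) by (simp add: canc2 m_assoc)
    also have "\<dots> = \<one>" using t g by (metis l_one r_inv inv_closed)
    finally show ?thesis .
  qed
  have ad: "Ad (g \<otimes> \<tau> \<otimes> inv g) (eps g *\<^sub>R Ad g y) = eps g *\<^sub>R Ad g y"
  proof -
    have "Ad (g \<otimes> \<tau> \<otimes> inv g) (eps g *\<^sub>R Ad g y) = Ad g (Ad \<tau> (Ad (inv g) (eps g *\<^sub>R Ad g y)))"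
      using g t ig by (simp add: Ad_m)
    also have "\<dots> = eps g *\<^sub>R Ad g y" using g t ig by (simp add: Ad_scale Ad_inv1)
    finally show ?thesis .
  qed
  show ?thesis using Wd c e sq ad by (simp add: gact_pair GP_iff)
qed

lemma gact_mult:
  assumes g: "g \<in> carrier G" and h: "h \<in> carrier G" and t: "snd W \<in> carrier G"
  shows "gact G eps Ad (g \<otimes> h) W = gact G eps Ad g (gact G eps Ad h W)"
proof -
  obtain y \<tau> where Wd: "W = (y, \<tau>)" by (cases W)
  have tc: "\<tau> \<in> carrier G" using t Wd by simp
  have "g \<otimes> h \<otimes> \<tau> \<otimes> inv (g \<otimes> h) = g \<otimes> (h \<otimes> \<tau> \<otimes> inv h) \<otimes> inv g"
    using g h tc by (simp add: m_assoc inv_mult_group)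
  moreover have "eps (g \<otimes> h) *\<^sub>R Ad (g \<otimes> h) y = eps g *\<^sub>R Ad g (eps h *\<^sub>R Ad h y)"
    using g h by (simp add: eps_m Ad_m Ad_scale)
  ultimately show ?thesis using Wd by (simp add: gact_pair)
qed

lemma gact_one: "snd W \<in> carrier G \<Longrightarrow> gact G eps Ad \<one> W = W"
  by (cases W) (simp add: gact_pair eps_one Ad_one)

lemma compl_GG: "W \<in> GPairs G eps Ad \<Longrightarrow> compl W \<in> GPairs G eps Ad"
  by (cases W) (auto simp: compl_def GP_iff Ad_neg)

lemma zstar_GG:
  assumes a: "a \<in> Zminus G Z \<sigma>" and W: "W \<in> GPairs G eps Ad"
  shows "zstar G a W \<in> GPairs G eps Ad"
proof -
  obtain y \<tau> where Wd: "W = (y, \<tau>)" by (cases W)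
  have t: "\<tau> \<in> carrier G" "eps \<tau> = -1" "\<tau> \<otimes> \<tau> = \<one>" "Ad \<tau> y = y" using W Wd by (auto simp: GP_iff)
  have ac: "a \<in> carrier G" using zm_car[OF a] .
  have "(a \<otimes> \<tau>) \<otimes> (a \<otimes> \<tau>) = a \<otimes> ((\<tau> \<otimes> a) \<otimes> \<tau>)" using ac t by (simp add: m_assoc)
  also have "\<dots> = a \<otimes> (inv a \<otimes> (\<tau> \<otimes> \<tau>))" using zm_swap[OF a t(1,2)] ac t by (simp add: m_assoc)
  also have "\<dots> = \<one>" using ac t by (simp add: canc1)
  finally have sq: "(a \<otimes> \<tau>) \<otimes> (a \<otimes> \<tau>) = \<one>" .
  show ?thesis using Wd t sq ac zm_eps[OF a] zm_Ad[OF a]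
    by (simp add: zstar_pair GP_iff eps_m Ad_m)
qed

lemma zstar_mult: "a \<in> carrier G \<Longrightarrow> b \<in> carrier G \<Longrightarrow> snd W \<in> carrier G \<Longrightarrow>
    zstar G a (zstar G b W) = zstar G (a \<otimes> b) W"
  by (cases W) (simp add: zstar_pair m_assoc)

lemma zstar_one: "snd W \<in> carrier G \<Longrightarrow> zstar G \<one> W = W"
  by (cases W) (simp add: zstar_pair)

lemma zstar_gact_up:
  assumes a: "a \<in> Z" and g: "g \<in> carrier G" "eps g = 1" and t: "snd W \<in> carrier G"
  shows "zstar G a (gact G eps Ad g W) = gact G eps Ad g (zstar G a W)"
proof -
  obtain y \<tau> where Wd: "W = (y, \<tau>)" by (cases W)
  have "a \<otimes> (g \<otimes> \<tau> \<otimes> inv g) = g \<otimes> (a \<otimes> \<tau>) \<otimes> inv g"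
    using Z_comm[OF a g] Z_car[OF a] g t Wd by (simp add: m_assoc[symmetric])
  then show ?thesis using Wd by (simp add: zstar_pair gact_pair)
qed

lemma zstar_gact_down:
  assumes a: "a \<in> Zminus G Z \<sigma>" and g: "g \<in> carrier G" "eps g = -1" and t: "snd W \<in> carrier G"
  shows "zstar G a (gact G eps Ad g W) = gact G eps Ad g (zstar G (inv a) W)"
proof -
  obtain y \<tau> where Wd: "W = (y, \<tau>)" by (cases W)
  have "a \<otimes> (g \<otimes> \<tau> \<otimes> inv g) = g \<otimes> (inv a \<otimes> \<tau>) \<otimes> inv g"
    using zm_swap2[OF a g] zm_car[OF a] g t Wd by (simp add: m_assoc[symmetric])
  then show ?thesis using Wd by (simp add: zstar_pair gact_pair)
qed

lemma GG_car: "W \<in> GPairs G eps Ad \<Longrightarrow> snd W \<in> carrier G"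
  by (cases W) (simp add: GP_iff)

lemma tact_up: "g \<in> carrier G \<Longrightarrow> eps g = 1 \<Longrightarrow> tact G eps Ad a g W = gact G eps Ad g W"
  by (simp add: tact_def Gup_iff)

lemma tact_down: "g \<in> carrier G \<Longrightarrow> eps g = -1 \<Longrightarrow> tact G eps Ad a g W = gact G eps Ad g (zstar G (inv a) W)"
  by (simp add: tact_def Gup_iff)

lemma tact_GG:
  assumes a: "a \<in> Zminus G Z \<sigma>" and g: "g \<in> carrier G" and W: "W \<in> GPairs G eps Ad"
  shows "tact G eps Ad a g W \<in> GPairs G eps Ad"
  using eps_val g gact_GG[OF g W] gact_GG[OF g zstar_GG[OF zm_inv[OF a] W]] tact_up tact_down
  by metis

lemma tact_one: "W \<in> GPairs G eps Ad \<Longrightarrow> tact G eps Ad a \<one> W = W"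
  by (simp add: tact_up eps_one gact_one GG_car)

lemma tact_mult:
  assumes a: "a \<in> Zminus G Z \<sigma>" and g: "g \<in> carrier G" and h: "h \<in> carrier G"
    and W: "W \<in> GPairs G eps Ad"
  shows "tact G eps Ad a (g \<otimes> h) W = tact G eps Ad a g (tact G eps Ad a h W)"
proof -
  have ac: "a \<in> carrier G" "inv a \<in> carrier G" using zm_car[OF a] by auto
  have Wc: "snd W \<in> carrier G" using GG_car[OF W] .
  have W': "snd (zstar G (inv a) W) \<in> carrier G" using Wc ac by (cases W) (simp add: zstar_pair)
  have hW: "snd (gact G eps Ad h W) \<in> carrier G" using Wc h by (cases W) (simp add: gact_pair)
  have eg: "eps g = 1 \<or> eps g = -1" and eh: "eps h = 1 \<or> eps h = -1" using eps_val g h by auto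
  have egh: "eps (g \<otimes> h) = eps g * eps h" using eps_m g h by simp
  show ?thesis
  proof (cases "eps g = 1")
    case g1: True
    show ?thesis
    proof (cases "eps h = 1")
      case True then show ?thesis using g1 g h egh Wc by (simp add: tact_up gact_mult)
    next
      case False then have "eps h = -1" using eh by simp
      then show ?thesis using g1 g h egh W' by (simp add: tact_up tact_down gact_mult)
    qed
  next
    case False then have g1: "eps g = -1" using eg by simp
    show ?thesis
    proof (cases "eps h = 1")
      case True then show ?thesis using g1 g h egh Wc W'
        by (simp add: tact_up tact_down gact_mult zstar_gact_up Z_inv zm_inv[OF a, unfolded Zm_iff])
    next
      case False then have h1: "eps h = -1" using eh by simp
      have "tact G eps Ad a g (tact G eps Ad a h W)
          = gact G eps Ad g (zstar G (inv a) (gact G eps Ad h (zstar G (inv a) W)))"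
        using g1 h1 g h by (simp add: tact_down)
      also have "\<dots> = gact G eps Ad g (gact G eps Ad h (zstar G (inv (inv a)) (zstar G (inv a) W)))"
        using zstar_gact_down[OF zm_inv[OF a] h h1 W'] by simp
      also have "\<dots> = gact G eps Ad g (gact G eps Ad h W)"
        using ac Wc by (simp add: zstar_mult zstar_one)
      also have "\<dots> = tact G eps Ad a (g \<otimes> h) W"
        using g1 h1 g h egh Wc by (simp add: tact_up gact_mult)
      finally show ?thesis by simp
    qed
  qed
qed

lemma bdry_car: "g \<in> carrier G \<Longrightarrow> bdry G \<sigma> g \<in> carrier G"
  using sig by (simp add: bdry_def)

lemma conj_bdry: "g \<in> carrier G \<Longrightarrow> g \<otimes> \<sigma> \<otimes> inv g = bdry G \<sigma> g \<otimes> \<sigma>"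
  using sig by (simp add: bdry_def m_assoc)

lemma conj_bdry': "g \<in> carrier G \<Longrightarrow> r \<in> carrier G \<Longrightarrow> g \<otimes> (\<sigma> \<otimes> (inv g \<otimes> r)) = bdry G \<sigma> g \<otimes> (\<sigma> \<otimes> r)"
  using conj_bdry[of g] sig bdry_car[of g] by (metis inv_closed m_assoc m_closed)

lemma bdry_zm: "g \<in> carrier G \<Longrightarrow> \<sigma> \<otimes> bdry G \<sigma> g \<otimes> \<sigma> = inv (bdry G \<sigma> g)"
  using sig by (simp add: bdry_def m_assoc inv_mult_group sig_inv)

lemma bdry_mult:
  assumes g: "g \<in> carrier G" "eps g = 1" and h: "h \<in> carrier G" and hZ: "bdry G \<sigma> h \<in> Z"
  shows "bdry G \<sigma> (g \<otimes> h) = bdry G \<sigma> h \<otimes> bdry G \<sigma> g"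
proof -
  have cc: "bdry G \<sigma> h \<in> carrier G" using Z_car hZ .
  have "bdry G \<sigma> (g \<otimes> h) = g \<otimes> (h \<otimes> (\<sigma> \<otimes> (inv h \<otimes> (inv g \<otimes> \<sigma>))))"
    using g h sig by (simp add: bdry_def m_assoc inv_mult_group)
  also have "\<dots> = g \<otimes> (bdry G \<sigma> h \<otimes> (\<sigma> \<otimes> (inv g \<otimes> \<sigma>)))"
    using conj_bdry'[OF h, of "inv g \<otimes> \<sigma>"] g sig by simp
  also have "\<dots> = (g \<otimes> bdry G \<sigma> h) \<otimes> (\<sigma> \<otimes> (inv g \<otimes> \<sigma>))"
    using g cc sig by (simp add: m_assoc)
  also have "\<dots> = (bdry G \<sigma> h \<otimes> g) \<otimes> (\<sigma> \<otimes> (inv g \<otimes> \<sigma>))"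
    using Z_comm[OF hZ g] by simp
  also have "\<dots> = bdry G \<sigma> h \<otimes> bdry G \<sigma> g"
    using g cc sig by (simp add: m_assoc bdry_def)
  finally show ?thesis .
qed

lemma bdry_one: "bdry G \<sigma> \<one> = \<one>"
  using sig by (simp add: bdry_def)

lemma bdry_inv:
  assumes g: "g \<in> carrier G" "eps g = 1" and gZ: "bdry G \<sigma> g \<in> Z"
  shows "bdry G \<sigma> (inv g) = inv (bdry G \<sigma> g)"
proof -
  have "bdry G \<sigma> g \<otimes> bdry G \<sigma> (inv g) = \<one>"
    using bdry_mult[of "inv g" g] g gZ eps_inv bdry_one by simp
  then have "bdry G \<sigma> (inv g) \<otimes> bdry G \<sigma> g = \<one>"
    using inv_comm bdry_car g by simp
  then show ?thesis using inv_equality bdry_car g by simp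
qed

lemma wp_iff:
  assumes gc: "\<gamma> \<in> carrier G"
  shows "tcompl G \<gamma> (x, \<sigma>) \<in> (\<lambda>g. gact G eps Ad g (x, \<sigma>)) ` Gup G eps \<longleftrightarrow>
    (\<exists>k. k \<in> carrier G \<and> eps k = 1 \<and> Ad k x = - x \<and> bdry G \<sigma> k = \<gamma>)"
proof -
  have "tcompl G \<gamma> (x, \<sigma>) = gact G eps Ad k (x, \<sigma>) \<longleftrightarrow> Ad k x = - x \<and> bdry G \<sigma> k = \<gamma>"
    if k: "k \<in> carrier G" "eps k = 1" for k
  proof -
    have "(\<gamma> \<otimes> \<sigma> = bdry G \<sigma> k \<otimes> \<sigma>) \<longleftrightarrow> \<gamma> = bdry G \<sigma> k"
      using right_cancel gc sig bdry_car k by blast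
    then show ?thesis using k conj_bdry[OF k(1)] by (auto simp: tcompl_def gact_pair)
  qed
  note eq = this
  show ?thesis
  proof
    assume "tcompl G \<gamma> (x, \<sigma>) \<in> (\<lambda>g. gact G eps Ad g (x, \<sigma>)) ` Gup G eps"
    then obtain k where k: "k \<in> Gup G eps" "tcompl G \<gamma> (x, \<sigma>) = gact G eps Ad k (x, \<sigma>)" by blast
    then show "\<exists>k. k \<in> carrier G \<and> eps k = 1 \<and> Ad k x = - x \<and> bdry G \<sigma> k = \<gamma>"
      using eq[of k] by (auto simp: Gup_iff)
  next
    assume "\<exists>k. k \<in> carrier G \<and> eps k = 1 \<and> Ad k x = - x \<and> bdry G \<sigma> k = \<gamma>"
    then obtain k where k: "k \<in> carrier G" "eps k = 1" "Ad k x = - x" "bdry G \<sigma> k = \<gamma>" by blast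
    then have "tcompl G \<gamma> (x, \<sigma>) = gact G eps Ad k (x, \<sigma>)" using eq by blast
    moreover have "k \<in> Gup G eps" using k by (simp add: Gup_iff)
    ultimately show "tcompl G \<gamma> (x, \<sigma>) \<in> (\<lambda>g. gact G eps Ad g (x, \<sigma>)) ` Gup G eps" by blast
  qed
qed

lemma coset_eq: "a \<in> carrier G \<Longrightarrow> b \<in> carrier G \<Longrightarrow> (Z #> a = Z #> b) \<longleftrightarrow> a \<otimes> inv b \<in> Z"
proof
  assume a: "a \<in> carrier G" and b: "b \<in> carrier G" and e: "Z #> a = Z #> b"
  have "a \<in> Z #> b" using rcos_self[OF a Zsg] e by simp
  then show "a \<otimes> inv b \<in> Z" using subgroup.rcos_module_imp[OF Zsg] a b is_group by blast
next
  assume a: "a \<in> carrier G" and b: "b \<in> carrier G" and m: "a \<otimes> inv b \<in> Z"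
  have "a \<in> Z #> b" using subgroup.rcos_module_rev[OF Zsg is_group b a m] .
  then show "Z #> a = Z #> b" using repr_independence[OF _ b Zsg] by simp
qed

lemma rcos_elem: "g \<in> carrier G \<Longrightarrow> y \<in> Z #> g \<Longrightarrow> \<exists>z\<in>Z. y = z \<otimes> g"
  by (auto simp: r_coset_def)

lemma eps_q_eq: assumes g: "g \<in> carrier G" shows "eps_q eps (Z #> g) = eps g"
proof -
  let ?y = "SOME y. y \<in> Z #> g"
  have "?y \<in> Z #> g" using rcos_self[OF g Zsg] by (rule someI)
  then obtain z where z: "z \<in> Z" "?y = z \<otimes> g" using rcos_elem g by blast
  then show ?thesis using g Z_car Z_eps eps_m by (simp add: eps_q_def)
qed

lemma Ad_q_eq: assumes g: "g \<in> carrier G" shows "Ad_q Ad (Z #> g) = Ad g"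
proof -
  let ?y = "SOME y. y \<in> Z #> g"
  have "?y \<in> Z #> g" using rcos_self[OF g Zsg] by (rule someI)
  then obtain z where z: "z \<in> Z" "?y = z \<otimes> g" using rcos_elem g by blast
  then show ?thesis using g Z_car Z_Ad_triv Ad_hom by (simp add: Ad_q_def)
qed

lemma gact_Mod:
  assumes g: "g \<in> carrier G" and t: "\<tau> \<in> carrier G"
  shows "gact (G Mod Z) (eps_q eps) (Ad_q Ad) (qmap G Z g) (y, qmap G Z \<tau>)
       = (eps g *\<^sub>R Ad g y, qmap G Z (g \<otimes> \<tau> \<otimes> inv g))"
proof -
  have gm: "Z #> g \<in> carrier (G Mod Z)" using g Z_car by (auto simp: FactGroup_def intro!: rcosetsI)
  have iv: "inv\<^bsub>G Mod Z\<^esub> (Z #> g) = Z #> inv g"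
    using normal.inv_FactGroup[OF Z_normal gm] normal.rcos_inv[OF Z_normal g] by simp
  have "(Z #> g) \<otimes>\<^bsub>G Mod Z\<^esub> (Z #> \<tau>) \<otimes>\<^bsub>G Mod Z\<^esub> (Z #> inv g) = Z #> (g \<otimes> \<tau> \<otimes> inv g)"
    using normal.rcos_sum[OF Z_normal] g t by simp
  then show ?thesis using iv eps_q_eq[OF g] Ad_q_eq[OF g] by (simp add: gact_def qmap_def)
qed

lemma coset_b: "g \<in> carrier G \<Longrightarrow> Z #> (bdry G \<sigma> g \<otimes> \<sigma>) = Z #> \<sigma> \<longleftrightarrow> bdry G \<sigma> g \<in> Z"
  using coset_eq[of "bdry G \<sigma> g \<otimes> \<sigma>" \<sigma>] sig bdry_car[of g]
  by (simp add: m_assoc)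

lemmas gact_Mod' = gact_Mod[unfolded qmap_def]

lemma stab_iff:
  "g \<in> GupStab G eps Ad Z (x, qmap G Z \<sigma>) \<longleftrightarrow>
     g \<in> carrier G \<and> eps g = 1 \<and> Ad g x = x \<and> bdry G \<sigma> g \<in> Z"
proof -
  have "Z #> (bdry G \<sigma> g \<otimes> \<sigma>) = Z #> \<sigma> \<longleftrightarrow> bdry G \<sigma> g \<in> Z" if "g \<in> carrier G" for g
    using coset_b that .
  then show ?thesis
    using sig by (auto simp: GupStab_def Gup_iff gact_Mod' conj_bdry qmap_def)
qed

lemma rhs_iff:
  "(- x, qmap G Z \<sigma>) \<in> (\<lambda>g. gact (G Mod Z) (eps_q eps) (Ad_q Ad) (qmap G Z g) (x, qmap G Z \<sigma>)) ` Gup G eps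
   \<longleftrightarrow> (\<exists>k. k \<in> carrier G \<and> eps k = 1 \<and> Ad k x = - x \<and> bdry G \<sigma> k \<in> Z)"
proof -
  have eq: "(- x, qmap G Z \<sigma>) = gact (G Mod Z) (eps_q eps) (Ad_q Ad) (qmap G Z g) (x, qmap G Z \<sigma>)
      \<longleftrightarrow> Ad g x = - x \<and> bdry G \<sigma> g \<in> Z" if g: "g \<in> carrier G" "eps g = 1" for g
  proof -
    have h: "gact (G Mod Z) (eps_q eps) (Ad_q Ad) (qmap G Z g) (x, qmap G Z \<sigma>) = (Ad g x, Z #> (bdry G \<sigma> g \<otimes> \<sigma>))"
      using gact_Mod[OF g(1) sig(1), of x] g conj_bdry[OF g(1)] by (simp add: qmap_def)
    have "((- x, qmap G Z \<sigma>) = gact (G Mod Z) (eps_q eps) (Ad_q Ad) (qmap G Z g) (x, qmap G Z \<sigma>))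
       \<longleftrightarrow> (- x = Ad g x \<and> Z #> \<sigma> = Z #> (bdry G \<sigma> g \<otimes> \<sigma>))"
      unfolding h by (simp add: qmap_def)
    also have "\<dots> \<longleftrightarrow> Ad g x = - x \<and> bdry G \<sigma> g \<in> Z" using coset_b[OF g(1)] by auto
    finally show ?thesis .
  qed
  show ?thesis
  proof
    assume "(- x, qmap G Z \<sigma>) \<in> (\<lambda>g. gact (G Mod Z) (eps_q eps) (Ad_q Ad) (qmap G Z g) (x, qmap G Z \<sigma>)) ` Gup G eps"
    then obtain k where k: "k \<in> Gup G eps" "(- x, qmap G Z \<sigma>) = gact (G Mod Z) (eps_q eps) (Ad_q Ad) (qmap G Z k) (x, qmap G Z \<sigma>)" by blast
    then show "\<exists>k. k \<in> carrier G \<and> eps k = 1 \<and> Ad k x = - x \<and> bdry G \<sigma> k \<in> Z"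
      using eq[of k] by (auto simp: Gup_iff)
  next
    assume "\<exists>k. k \<in> carrier G \<and> eps k = 1 \<and> Ad k x = - x \<and> bdry G \<sigma> k \<in> Z"
    then obtain k where k: "k \<in> carrier G" "eps k = 1" "Ad k x = - x" "bdry G \<sigma> k \<in> Z" by blast
    then have "(- x, qmap G Z \<sigma>) = gact (G Mod Z) (eps_q eps) (Ad_q Ad) (qmap G Z k) (x, qmap G Z \<sigma>)" using eq by blast
    moreover have "k \<in> Gup G eps" using k by (simp add: Gup_iff)
    ultimately show "(- x, qmap G Z \<sigma>) \<in> (\<lambda>g. gact (G Mod Z) (eps_q eps) (Ad_q Ad) (qmap G Z g) (x, qmap G Z \<sigma>)) ` Gup G eps" by blast
  qed
qed

lemma tcompl_eq: "tcompl G a W = zstar G a (compl W)"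
  by (simp add: tcompl_def zstar_def compl_def)

context
  fixes \<alpha> assumes a: "\<alpha> \<in> Zminus G Z \<sigma>"
begin

lemma ac: "\<alpha> \<in> carrier G" using zm_car[OF a] .
lemma aZ: "\<alpha> \<in> Z" using a by (simp add: Zm_iff)

lemma part_a: "(x1, \<sigma>1) \<in> GPairs G eps Ad \<Longrightarrow> qG G Z (tcompl G \<alpha> (x1, \<sigma>1)) = (- x1, qmap G Z \<sigma>1)"
proof -
  assume W: "(x1, \<sigma>1) \<in> GPairs G eps Ad"
  then have s1: "\<sigma>1 \<in> carrier G" by (simp add: GP_iff)
  have "Z #> (\<alpha> \<otimes> \<sigma>1) = Z #> \<sigma>1" using coset_eq[of "\<alpha> \<otimes> \<sigma>1" \<sigma>1] s1 ac aZ by (simp add: m_assoc)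
  then show ?thesis by (simp add: qG_def tcompl_def qmap_def)
qed

lemma part_b: "\<alpha> \<otimes> \<alpha> \<noteq> \<one> \<Longrightarrow> \<exists>W1\<in>GPairs G eps Ad. tcompl G \<alpha> (tcompl G \<alpha> W1) \<noteq> W1"
proof -
  assume n: "\<alpha> \<otimes> \<alpha> \<noteq> \<one>"
  have "\<alpha> \<otimes> (\<alpha> \<otimes> \<sigma>) \<noteq> \<sigma>" using n ac sig by (simp add: m_assoc[symmetric])
  then have "tcompl G \<alpha> (tcompl G \<alpha> (x, \<sigma>)) \<noteq> (x, \<sigma>)" by (simp add: tcompl_def)
  then show ?thesis using W_in by blast
qed

lemma part_c1: "W1 \<in> GPairs G eps Ad \<Longrightarrow> tcompl G \<alpha> W1 \<in> GPairs G eps Ad"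
  by (simp add: tcompl_eq zstar_GG[OF a] compl_GG)

lemma part_c2: "g \<in> Gup G eps \<Longrightarrow> W1 \<in> GPairs G eps Ad \<Longrightarrow>
    tcompl G \<alpha> (gact G eps Ad g W1) = gact G eps Ad g (tcompl G \<alpha> W1)"
proof -
  assume g: "g \<in> Gup G eps" and W: "W1 \<in> GPairs G eps Ad"
  have gc: "g \<in> carrier G" "eps g = 1" using g by (auto simp: Gup_iff)
  have "compl (gact G eps Ad g W1) = gact G eps Ad g (compl W1)"
    using gc by (cases W1) (simp add: compl_def gact_pair Ad_neg)
  moreover have "snd (compl W1) \<in> carrier G" using GG_car[OF W] by (cases W1) (simp add: compl_def)
  ultimately show ?thesis using zstar_gact_up[OF aZ gc] by (simp add: tcompl_eq)
qed

lemma part_d: "tcompl G \<alpha> W1 = zstar G \<alpha> (compl W1)"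
  by (rule tcompl_eq)

lemma part_e1: "group_action G (GPairs G eps Ad) (\<lambda>g. restrict (tact G eps Ad \<alpha> g) (GPairs G eps Ad))"
  by (rule group_actionI'[OF is_group]) (auto intro: tact_GG[OF a] tact_one tact_mult[OF a])

lemma part_e2: "(x1, \<sigma>1) \<in> GPairs G eps Ad \<Longrightarrow> tcompl G \<alpha> (x1, \<sigma>1) = tact G eps Ad \<alpha> \<sigma>1 (x1, \<sigma>1)"
proof -
  assume W: "(x1, \<sigma>1) \<in> GPairs G eps Ad"
  then have t: "\<sigma>1 \<in> carrier G" "eps \<sigma>1 = -1" "\<sigma>1 \<otimes> \<sigma>1 = \<one>" "Ad \<sigma>1 x1 = x1" by (auto simp: GP_iff)
  have i1: "inv \<sigma>1 = \<sigma>1" using inv_equality[of \<sigma>1 \<sigma>1] t by simp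
  have "\<sigma>1 \<otimes> (inv \<alpha> \<otimes> \<sigma>1) \<otimes> inv \<sigma>1 = \<sigma>1 \<otimes> inv \<alpha>"
    using t i1 ac by (simp add: m_assoc)
  also have "\<dots> = \<alpha> \<otimes> \<sigma>1" using zm_swap2[OF a t(1,2)] .
  finally show ?thesis using t by (simp add: tact_down tcompl_def zstar_pair gact_pair)
qed

lemma Wplus_act:
  assumes g: "g \<in> carrier G" and h: "h \<in> Gup G eps"
    and hyp: "tcompl G \<alpha> (x, \<sigma>) \<in> (\<lambda>g. gact G eps Ad g (x, \<sigma>)) ` Gup G eps"
  shows "tact G eps Ad \<alpha> g (gact G eps Ad h (x, \<sigma>)) \<in> (\<lambda>g. gact G eps Ad g (x, \<sigma>)) ` Gup G eps"
proof -
  obtain k where k: "k \<in> Gup G eps" "tcompl G \<alpha> (x, \<sigma>) = gact G eps Ad k (x, \<sigma>)" using hyp by blast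
  have hc: "h \<in> carrier G" "eps h = 1" using h by (auto simp: Gup_iff)
  have kc: "k \<in> carrier G" "eps k = 1" using k by (auto simp: Gup_iff)
  have ghc: "g \<otimes> h \<in> carrier G" using g hc by simp
  have "tact G eps Ad \<alpha> g (gact G eps Ad h (x, \<sigma>)) = tact G eps Ad \<alpha> (g \<otimes> h) (x, \<sigma>)"
    using tact_mult[OF a g hc(1) W_in] tact_up[OF hc] by simp
  also have "\<dots> \<in> (\<lambda>g. gact G eps Ad g (x, \<sigma>)) ` Gup G eps"
  proof (cases "eps (g \<otimes> h) = 1")
    case True
    then show ?thesis using tact_up[OF ghc True] ghc by (auto simp: Gup_iff)
  next
    case False
    then have e: "eps (g \<otimes> h) = -1" using eps_val ghc by auto
    define m where "m = g \<otimes> h \<otimes> \<sigma>"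
    have mc: "m \<in> carrier G" "eps m = 1" using m_def ghc sig e eps_m by auto
    have "g \<otimes> h = m \<otimes> \<sigma>" using m_def ghc sig by (simp add: m_assoc)
    then have "tact G eps Ad \<alpha> (g \<otimes> h) (x, \<sigma>) = tact G eps Ad \<alpha> m (tact G eps Ad \<alpha> \<sigma> (x, \<sigma>))"
      using tact_mult[OF a mc(1) sig(1) W_in] by simp
    also have "\<dots> = gact G eps Ad m (gact G eps Ad k (x, \<sigma>))"
      using part_e2[OF W_in] k tact_up[OF mc] by simp
    also have "\<dots> = gact G eps Ad (m \<otimes> k) (x, \<sigma>)" using gact_mult mc kc sig by simp
    finally show ?thesis using mc kc eps_m by (auto simp: Gup_iff)
  qed
  finally show ?thesis .
qed

lemma part_e3: "tcompl G \<alpha> (x, \<sigma>) \<in> (\<lambda>g. gact G eps Ad g (x, \<sigma>)) ` Gup G eps \<Longrightarrow>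
   (\<forall>g\<in>carrier G. \<forall>W1\<in>(\<lambda>g. gact G eps Ad g (x, \<sigma>)) ` Gup G eps.
       tact G eps Ad \<alpha> g W1 \<in> (\<lambda>g. gact G eps Ad g (x, \<sigma>)) ` Gup G eps)"
  using Wplus_act by blast

end

lemma part_f1:
  "(\<exists>\<alpha>'\<in>Zminus G Z \<sigma>. tcompl G \<alpha>' (x, \<sigma>) \<in> (\<lambda>g. gact G eps Ad g (x, \<sigma>)) ` Gup G eps) \<longleftrightarrow>
   (- x, qmap G Z \<sigma>) \<in> (\<lambda>g. gact (G Mod Z) (eps_q eps) (Ad_q Ad) (qmap G Z g) (x, qmap G Z \<sigma>)) ` Gup G eps"
proof -
  have "(\<exists>\<alpha>'\<in>Zminus G Z \<sigma>. tcompl G \<alpha>' (x, \<sigma>) \<in> (\<lambda>g. gact G eps Ad g (x, \<sigma>)) ` Gup G eps) \<longleftrightarrow>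
     (\<exists>\<alpha>'\<in>Zminus G Z \<sigma>. \<exists>k. k \<in> carrier G \<and> eps k = 1 \<and> Ad k x = - x \<and> bdry G \<sigma> k = \<alpha>')"
    using wp_iff zm_car by blast
  also have "\<dots> \<longleftrightarrow> (\<exists>k. k \<in> carrier G \<and> eps k = 1 \<and> Ad k x = - x \<and> bdry G \<sigma> k \<in> Z)"
    using bdry_zm by (auto simp: Zm_iff)
  also have "\<dots> \<longleftrightarrow> (- x, qmap G Z \<sigma>) \<in> (\<lambda>g. gact (G Mod Z) (eps_q eps) (Ad_q Ad) (qmap G Z g) (x, qmap G Z \<sigma>)) ` Gup G eps"
    using rhs_iff by simp
  finally show ?thesis .
qed

context
  fixes \<alpha> assumes a: "\<alpha> \<in> Zminus G Z \<sigma>"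
begin

lemma part_f2_iff:
  assumes hyp: "tcompl G \<alpha> (x, \<sigma>) \<in> (\<lambda>g. gact G eps Ad g (x, \<sigma>)) ` Gup G eps"
    and b: "\<beta> \<in> Zminus G Z \<sigma>"
  shows "tcompl G \<beta> (x, \<sigma>) \<in> (\<lambda>g. gact G eps Ad g (x, \<sigma>)) ` Gup G eps \<longleftrightarrow>
         inv \<beta> \<otimes> \<alpha> \<in> bdry G \<sigma> ` GupStab G eps Ad Z (x, qmap G Z \<sigma>)"
proof -
  have ac: "\<alpha> \<in> carrier G" "\<alpha> \<in> Z" using a zm_car by (auto simp: Zm_iff)
  have bc: "\<beta> \<in> carrier G" "\<beta> \<in> Z" using b zm_car by (auto simp: Zm_iff)
  obtain k where k: "k \<in> carrier G" "eps k = 1" "Ad k x = - x" "bdry G \<sigma> k = \<alpha>"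
    using hyp wp_iff[OF ac(1)] by blast
  show ?thesis
  proof
    assume "tcompl G \<beta> (x, \<sigma>) \<in> (\<lambda>g. gact G eps Ad g (x, \<sigma>)) ` Gup G eps"
    then obtain m where m: "m \<in> carrier G" "eps m = 1" "Ad m x = - x" "bdry G \<sigma> m = \<beta>"
      using wp_iff[OF bc(1)] by blast
    define g where "g = inv m \<otimes> k"
    have gc: "g \<in> carrier G" "eps g = 1" using g_def m k eps_m eps_inv by auto
    have "bdry G \<sigma> g = bdry G \<sigma> k \<otimes> bdry G \<sigma> (inv m)"
      using bdry_mult[of "inv m" k] m k ac g_def eps_inv by simp
    also have "\<dots> = \<alpha> \<otimes> inv \<beta>" using bdry_inv[of m] m bc k by simp
    also have "\<dots> = inv \<beta> \<otimes> \<alpha>" using Z_comm2[OF ac(2) Z_inv[OF bc(2)]] .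
    finally have bg: "bdry G \<sigma> g = inv \<beta> \<otimes> \<alpha>" .
    have "Ad g x = Ad (inv m) (Ad m x)" using g_def m k by (simp add: Ad_m)
    then have adg: "Ad g x = x" using Ad_inv1[OF m(1), of x] m(3) by simp
    have "g \<in> GupStab G eps Ad Z (x, qmap G Z \<sigma>)"
      using stab_iff gc adg bg Z_mult[OF Z_inv[OF bc(2)] ac(2)] by simp
    then show "inv \<beta> \<otimes> \<alpha> \<in> bdry G \<sigma> ` GupStab G eps Ad Z (x, qmap G Z \<sigma>)"
      using bg by force
  next
    assume "inv \<beta> \<otimes> \<alpha> \<in> bdry G \<sigma> ` GupStab G eps Ad Z (x, qmap G Z \<sigma>)"
    then obtain g where g: "g \<in> GupStab G eps Ad Z (x, qmap G Z \<sigma>)" and bg: "inv \<beta> \<otimes> \<alpha> = bdry G \<sigma> g"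
      by blast
    have gc: "g \<in> carrier G" "eps g = 1" "Ad g x = x" "bdry G \<sigma> g \<in> Z" using g stab_iff by auto
    define m where "m = k \<otimes> inv g"
    have mc: "m \<in> carrier G" "eps m = 1" using m_def gc k eps_m eps_inv by auto
    have big: "bdry G \<sigma> (inv g) = inv (bdry G \<sigma> g)" using bdry_inv gc by simp
    have bigZ: "bdry G \<sigma> (inv g) \<in> Z" using big Z_inv gc by simp
    have "bdry G \<sigma> m = bdry G \<sigma> (inv g) \<otimes> bdry G \<sigma> k"
      using bdry_mult[of k "inv g"] k gc bigZ m_def by simp
    also have "\<dots> = inv (inv \<beta> \<otimes> \<alpha>) \<otimes> \<alpha>" using big bg k by simp
    also have "\<dots> = inv \<alpha> \<otimes> (\<beta> \<otimes> \<alpha>)" using ac bc by (simp add: inv_mult_group m_assoc)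
    also have "\<dots> = inv \<alpha> \<otimes> (\<alpha> \<otimes> \<beta>)" using Z_comm2[OF bc(2) ac(2)] by simp
    also have "\<dots> = \<beta>" using ac bc by (simp add: canc2)
    finally have bm: "bdry G \<sigma> m = \<beta>" .
    have "Ad (inv g) x = x" using Ad_inv1[OF gc(1), of x] gc by simp
    then have "Ad m x = - x" using m_def k gc by (simp add: Ad_m)
    then show "tcompl G \<beta> (x, \<sigma>) \<in> (\<lambda>g. gact G eps Ad g (x, \<sigma>)) ` Gup G eps"
      using wp_iff[OF bc(1)] mc bm by blast
  qed
qed

lemma part_f2_act:
  assumes b: "\<beta> \<in> Zminus G Z \<sigma>" and g: "g \<in> Gdown G eps" and W: "W1 \<in> GPairs G eps Ad"
  shows "tact G eps Ad \<beta> g W1 = zstar G (\<beta> \<otimes> inv \<alpha>) (tact G eps Ad \<alpha> g W1)"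
proof -
  have ac: "\<alpha> \<in> carrier G" "\<alpha> \<in> Z" using a zm_car by (auto simp: Zm_iff)
  have bc: "\<beta> \<in> carrier G" "\<beta> \<in> Z" using b zm_car by (auto simp: Zm_iff)
  have gc: "g \<in> carrier G" "eps g = -1" using g by (auto simp: Gdown_iff)
  have Wc: "snd W1 \<in> carrier G" using GG_car[OF W] .
  have W': "snd (zstar G (inv \<alpha>) W1) \<in> carrier G" using Wc ac by (cases W1) (simp add: zstar_pair)
  have ba: "\<beta> \<otimes> inv \<alpha> \<in> Zminus G Z \<sigma>" using zm_mult[OF b zm_inv[OF a]] .
  have "zstar G (\<beta> \<otimes> inv \<alpha>) (tact G eps Ad \<alpha> g W1)
      = gact G eps Ad g (zstar G (inv (\<beta> \<otimes> inv \<alpha>)) (zstar G (inv \<alpha>) W1))"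
    using zstar_gact_down[OF ba gc W'] gc by (simp add: tact_down)
  also have "\<dots> = gact G eps Ad g (zstar G (inv (\<beta> \<otimes> inv \<alpha>) \<otimes> inv \<alpha>) W1)"
    using ac bc Wc by (simp add: zstar_mult)
  also have "inv (\<beta> \<otimes> inv \<alpha>) \<otimes> inv \<alpha> = \<alpha> \<otimes> (inv \<beta> \<otimes> inv \<alpha>)"
    using ac bc by (simp add: inv_mult_group m_assoc)
  also have "\<dots> = \<alpha> \<otimes> (inv \<alpha> \<otimes> inv \<beta>)" using Z_comm2[OF Z_inv[OF bc(2)] Z_inv[OF ac(2)]] by simp
  also have "\<dots> = inv \<beta>" using ac bc by (simp add: canc1)
  finally show ?thesis using gc by (simp add: tact_down)
qed

lemma main:
  "let GG = GPairs G eps Ad;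
        W = (x, \<sigma>);
        Wq = (x, qmap G Z \<sigma>);
        Wplus = (\<lambda>g. gact G eps Ad g W) ` Gup G eps;
        Zm = Zminus G Z \<sigma>;
        Z2 = bdry G \<sigma> ` GupStab G eps Ad Z Wq
    in
    (\<forall>x1 \<sigma>1. (x1, \<sigma>1) \<in> GG \<longrightarrow> qG G Z (tcompl G \<alpha> (x1, \<sigma>1)) = (- x1, qmap G Z \<sigma>1))
    \<and> (\<alpha> \<otimes>\<^bsub>G\<^esub> \<alpha> \<noteq> \<one>\<^bsub>G\<^esub> \<longrightarrow> (\<exists>W1\<in>GG. tcompl G \<alpha> (tcompl G \<alpha> W1) \<noteq> W1))
    \<and> (\<forall>W1\<in>GG. tcompl G \<alpha> W1 \<in> GG)
    \<and> (\<forall>g\<in>Gup G eps. \<forall>W1\<in>GG.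
          tcompl G \<alpha> (gact G eps Ad g W1) = gact G eps Ad g (tcompl G \<alpha> W1))
    \<and> (\<forall>W1\<in>GG. tcompl G \<alpha> W1 = zstar G \<alpha> (compl W1))
    \<and> group_action G GG (\<lambda>g. restrict (tact G eps Ad \<alpha> g) GG)
    \<and> (\<forall>x1 \<sigma>1. (x1, \<sigma>1) \<in> GG \<longrightarrow> tcompl G \<alpha> (x1, \<sigma>1) = tact G eps Ad \<alpha> \<sigma>1 (x1, \<sigma>1))
    \<and> (tcompl G \<alpha> W \<in> Wplus \<longrightarrow>
         (\<forall>g\<in>carrier G. \<forall>W1\<in>Wplus. tact G eps Ad \<alpha> g W1 \<in> Wplus))
    \<and> ((\<exists>\<alpha>'\<in>Zm. tcompl G \<alpha>' W \<in> Wplus) \<longleftrightarrow>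
         (- x, qmap G Z \<sigma>) \<in> (\<lambda>g. gact (G Mod Z) (eps_q eps) (Ad_q Ad) (qmap G Z g) Wq) ` Gup G eps)
    \<and> (tcompl G \<alpha> W \<in> Wplus \<longrightarrow>
         (\<forall>\<beta>\<in>Zm. (tcompl G \<beta> W \<in> Wplus \<longleftrightarrow> inv\<^bsub>G\<^esub> \<beta> \<otimes>\<^bsub>G\<^esub> \<alpha> \<in> Z2)
            \<and> (tcompl G \<beta> W \<in> Wplus \<longrightarrow>
                 (\<forall>g\<in>Gdown G eps. \<forall>W1\<in>GG.
                    tact G eps Ad \<beta> g W1
                      = zstar G (\<beta> \<otimes>\<^bsub>G\<^esub> inv\<^bsub>G\<^esub> \<alpha>) (tact G eps Ad \<alpha> g W1)))))"
  unfolding Let_def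
  apply (intro conjI)
  subgoal using part_a[OF a] by blast
  subgoal using part_b[OF a] by blast
  subgoal using part_c1[OF a] by blast
  subgoal using part_c2[OF a] by blast
  subgoal using part_d[OF a] by blast
  subgoal using part_e1[OF a] by blast
  subgoal using part_e2[OF a] by blast
  subgoal using part_e3[OF a] by blast
  subgoal using part_f1 by blast
  subgoal using part_f2_iff part_f2_act by blast
  done

end

end


theorem lemma2p18:
  fixes G :: "('g, 'm) monoid_scheme"
    and eps :: "'g \<Rightarrow> real"
    and Ad :: "'g \<Rightarrow> 'v::euclidean_space \<Rightarrow> 'v"
    and Z :: "'g set"
    and x :: 'v and \<sigma> :: 'g
  assumes grp: "group G"
    and eps_val: "\<forall>g\<in>carrier G. eps g = 1 \<or> eps g = -1"
    and eps_hom: "\<forall>g\<in>carrier G. \<forall>h\<in>carrier G. eps (g \<otimes>\<^bsub>G\<^esub> h) = eps g * eps h"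
    and Ad_lin: "\<forall>g\<in>carrier G. linear (Ad g)"
    and Ad_one: "Ad \<one>\<^bsub>G\<^esub> = id"
    and Ad_hom: "\<forall>g\<in>carrier G. \<forall>h\<in>carrier G. Ad (g \<otimes>\<^bsub>G\<^esub> h) = Ad g \<circ> Ad h"
    and Z_sub: "Z \<subseteq> Gup G eps"
    and Z_central: "\<forall>z\<in>Z. \<forall>g\<in>Gup G eps. z \<otimes>\<^bsub>G\<^esub> g = g \<otimes>\<^bsub>G\<^esub> z"
    and Z_normal: "Z \<lhd> G"
    and Z_Ad_triv: "\<forall>z\<in>Z. Ad z = id"
    and GG_ne: "GPairs G eps Ad \<noteq> {}"
    and W_in: "(x, \<sigma>) \<in> GPairs G eps Ad"
  shows "\<forall>\<alpha>\<in>Zminus G Z \<sigma>.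
    let GG = GPairs G eps Ad;
        W = (x, \<sigma>);
        Wq = (x, qmap G Z \<sigma>);
        Wplus = (\<lambda>g. gact G eps Ad g W) ` Gup G eps;
        Zm = Zminus G Z \<sigma>;
        Z2 = bdry G \<sigma> ` GupStab G eps Ad Z Wq
    in
    \<comment> \<open>(a)\<close>
    (\<forall>x1 \<sigma>1. (x1, \<sigma>1) \<in> GG \<longrightarrow> qG G Z (tcompl G \<alpha> (x1, \<sigma>1)) = (- x1, qmap G Z \<sigma>1))
    \<comment> \<open>(b)\<close>
    \<and> (\<alpha> \<otimes>\<^bsub>G\<^esub> \<alpha> \<noteq> \<one>\<^bsub>G\<^esub> \<longrightarrow> (\<exists>W1\<in>GG. tcompl G \<alpha> (tcompl G \<alpha> W1) \<noteq> W1))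
    \<comment> \<open>(c)\<close>
    \<and> (\<forall>W1\<in>GG. tcompl G \<alpha> W1 \<in> GG)
    \<and> (\<forall>g\<in>Gup G eps. \<forall>W1\<in>GG.
          tcompl G \<alpha> (gact G eps Ad g W1) = gact G eps Ad g (tcompl G \<alpha> W1))
    \<comment> \<open>(d)\<close>
    \<and> (\<forall>W1\<in>GG. tcompl G \<alpha> W1 = zstar G \<alpha> (compl W1))
    \<comment> \<open>(e)\<close>
    \<and> group_action G GG (\<lambda>g. restrict (tact G eps Ad \<alpha> g) GG)
    \<and> (\<forall>x1 \<sigma>1. (x1, \<sigma>1) \<in> GG \<longrightarrow> tcompl G \<alpha> (x1, \<sigma>1) = tact G eps Ad \<alpha> \<sigma>1 (x1, \<sigma>1))
    \<and> (tcompl G \<alpha> W \<in> Wplus \<longrightarrow>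
         (\<forall>g\<in>carrier G. \<forall>W1\<in>Wplus. tact G eps Ad \<alpha> g W1 \<in> Wplus))
    \<comment> \<open>(f)\<close>
    \<and> ((\<exists>\<alpha>'\<in>Zm. tcompl G \<alpha>' W \<in> Wplus) \<longleftrightarrow>
         (- x, qmap G Z \<sigma>) \<in> (\<lambda>g. gact (G Mod Z) (eps_q eps) (Ad_q Ad) (qmap G Z g) Wq) ` Gup G eps)
    \<and> (tcompl G \<alpha> W \<in> Wplus \<longrightarrow>
         (\<forall>\<beta>\<in>Zm. (tcompl G \<beta> W \<in> Wplus \<longleftrightarrow> inv\<^bsub>G\<^esub> \<beta> \<otimes>\<^bsub>G\<^esub> \<alpha> \<in> Z2)
            \<and> (tcompl G \<beta> W \<in> Wplus \<longrightarrow>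
                 (\<forall>g\<in>Gdown G eps. \<forall>W1\<in>GG.
                    tact G eps Ad \<beta> g W1
                      = zstar G (\<beta> \<otimes>\<^bsub>G\<^esub> inv\<^bsub>G\<^esub> \<alpha>) (tact G eps Ad \<alpha> g W1)))))"
  proof -
  have inst: "gl G eps Ad Z x \<sigma>"
    unfolding gl_def gl_axioms_def
    using grp eps_val eps_hom Ad_lin Ad_one Ad_hom Z_sub Z_central Z_normal Z_Ad_triv W_in
    by blast
  show ?thesis
    by (intro ballI) (rule gl.main[OF inst])
qed

end
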